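(* Let $k>1$ be a fixed integer. Suppose that a semigroup $S$ (i) satisfies the identities $x\,y_1^ky_2^k\cdots y_n^k\,x\approx x\,y_n^ky_{n-1}^k\cdots y_1^k\,x$ for all $n>1$; (ii) does not satisfy the identity $x^ky^kx^k\approx x^k(y^kx^k)^{k+1}$; (iii) satisfies the identities $x^{k+2}\approx x^2$, $x^{k+1}yx\approx xyx$ and $xyx^{k+1}\approx xyx$. Then $S$ is non-finitely based.
   Context: All letters denote distinct variables; words are elements of the free semigroup over a countably infinite alphabet. $S$ satisfies $\mathbf u\approx\mathbf v$ if $\varphi(\mathbf u)=\varphi(\mathbf v)$ for every homomorphism $\varphi$ from the free semigroup to $S$. $S$ is finitely based if all its identities are derivable from a finite subset of them; otherwise non-finitely based. *)

theory Defs
  imports Main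
begin

text \<open>Words over the countably infinite alphabet of variables (natural numbers):
  elements of the free semigroup = nonempty lists of letters.\<close>

definition is_word :: "nat list \<Rightarrow> bool" where
  "is_word w \<longleftrightarrow> w \<noteq> []"

fun eval_word :: "(nat \<Rightarrow> 'a::semigroup_mult) \<Rightarrow> nat list \<Rightarrow> 'a" where
  "eval_word \<phi> [] = undefined"
| "eval_word \<phi> [x] = \<phi> x"
| "eval_word \<phi> (x # y # w) = \<phi> x * eval_word \<phi> (y # w)"

definition satisfies :: "'a::semigroup_mult itself \<Rightarrow> nat list \<Rightarrow> nat list \<Rightarrow> bool" where
  "satisfies S u v \<longleftrightarrow> is_word u \<and> is_word v \<and>
     (\<forall>\<phi> :: nat \<Rightarrow> 'a. eval_word \<phi> u = eval_word \<phi> v)"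

definition subst_word :: "(nat \<Rightarrow> nat list) \<Rightarrow> nat list \<Rightarrow> nat list" where
  "subst_word \<sigma> w = concat (map \<sigma> w)"

text \<open>Derivability of identities from a set of identities (equational logic
  for semigroups: the fully invariant congruence generated by \<Sigma>).\<close>

inductive derivable :: "(nat list \<times> nat list) set \<Rightarrow> nat list \<Rightarrow> nat list \<Rightarrow> bool"
  for \<Sigma> where
  ax: "(u, v) \<in> \<Sigma> \<Longrightarrow> derivable \<Sigma> u v"
| refl: "is_word u \<Longrightarrow> derivable \<Sigma> u u"
| sym: "derivable \<Sigma> u v \<Longrightarrow> derivable \<Sigma> v u"
| trans: "derivable \<Sigma> u v \<Longrightarrow> derivable \<Sigma> v w \<Longrightarrow> derivable \<Sigma> u w"
| subst: "derivable \<Sigma> u v \<Longrightarrow> (\<forall>x. is_word (\<sigma> x)) \<Longrightarrow>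
           derivable \<Sigma> (subst_word \<sigma> u) (subst_word \<sigma> v)"
| mult_left: "derivable \<Sigma> u v \<Longrightarrow> is_word w \<Longrightarrow> derivable \<Sigma> (w @ u) (w @ v)"
| mult_right: "derivable \<Sigma> u v \<Longrightarrow> is_word w \<Longrightarrow> derivable \<Sigma> (u @ w) (v @ w)"

definition finitely_based :: "'a::semigroup_mult itself \<Rightarrow> bool" where
  "finitely_based S \<longleftrightarrow>
     (\<exists>\<Sigma>. finite \<Sigma> \<and> (\<forall>(u, v) \<in> \<Sigma>. satisfies S u v) \<and>
          (\<forall>u v. satisfies S u v \<longrightarrow> derivable \<Sigma> u v))"

definition wpow :: "nat list \<Rightarrow> nat \<Rightarrow> nat list" where
  "wpow w m = concat (replicate m w)"

end

theory Submission
  imports Defs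
begin


fun spow :: "'a::semigroup_mult \<Rightarrow> nat \<Rightarrow> 'a" where
  "spow z 0 = z" | "spow z (Suc n) = z * spow z n"

fun pw :: "'a::semigroup_mult \<Rightarrow> nat \<Rightarrow> 'a \<Rightarrow> 'a" where
  "pw z 0 x = x" | "pw z (Suc n) x = z * pw z n x"

lemma eval_Cons: "v \<noteq> [] \<Longrightarrow> eval_word \<phi> (x # v) = \<phi> x * eval_word \<phi> v"
  by (cases v) auto

lemma eval_append: "u \<noteq> [] \<Longrightarrow> v \<noteq> [] \<Longrightarrow> eval_word \<phi> (u @ v) = eval_word \<phi> u * eval_word \<phi> v"
proof (induction u)
  case Nil then show ?case by simp
next
  case (Cons x u)
  show ?case
  proof (cases "u = []")
    case True then show ?thesis using Cons by (simp add: eval_Cons)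
  next
    case False then show ?thesis using Cons by (simp add: eval_Cons mult.assoc)
  qed
qed

lemma subst_Nil[simp]: "subst_word \<sigma> [] = []" by (simp add: subst_word_def)
lemma subst_Cons[simp]: "subst_word \<sigma> (x # w) = \<sigma> x @ subst_word \<sigma> w" by (simp add: subst_word_def)
lemma subst_append[simp]: "subst_word \<sigma> (u @ w) = subst_word \<sigma> u @ subst_word \<sigma> w" by (simp add: subst_word_def)
lemma subst_id[simp]: "subst_word (\<lambda>x. [x]) w = w" by (induction w) auto
lemma subst_subst: "subst_word \<theta> (subst_word \<sigma> u) = subst_word (\<lambda>x. subst_word \<theta> (\<sigma> x)) u"
  by (induction u) auto
lemma subst_ne: "\<forall>x. \<sigma> x \<noteq> [] \<Longrightarrow> w \<noteq> [] \<Longrightarrow> subst_word \<sigma> w \<noteq> []"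
  by (cases w) auto

lemma eval_subst: "\<forall>x. \<sigma> x \<noteq> [] \<Longrightarrow> w \<noteq> [] \<Longrightarrow>
   eval_word \<phi> (subst_word \<sigma> w) = eval_word (\<lambda>x. eval_word \<phi> (\<sigma> x)) w"
proof (induction w)
  case Nil then show ?case by simp
next
  case (Cons x w)
  show ?case
  proof (cases "w = []")
    case True then show ?thesis by simp
  next
    case False then show ?thesis using Cons by (simp add: eval_append subst_ne eval_Cons)
  qed
qed

lemma sat_subst: "satisfies S u v \<Longrightarrow> \<forall>x. \<sigma> x \<noteq> [] \<Longrightarrow> satisfies S (subst_word \<sigma> u) (subst_word \<sigma> v)"
  unfolding satisfies_def is_word_def by (simp add: subst_ne eval_subst)

lemma sat_sym: "satisfies S u v \<Longrightarrow> satisfies S v u"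
  unfolding satisfies_def by auto

lemma eval_ctx: "u \<noteq> [] \<Longrightarrow> v \<noteq> [] \<Longrightarrow> eval_word \<phi> u = eval_word \<phi> v \<Longrightarrow>
   eval_word \<phi> (a @ u @ b) = eval_word \<phi> (a @ v @ b)"
  by (cases "a = []"; cases "b = []") (simp_all add: eval_append)

lemma wpow_single: "wpow [i] m = replicate m i"
  unfolding wpow_def by (induction m) auto

lemma eval_rep: "eval_word \<phi> (replicate (Suc m) x) = spow (\<phi> x) m"
  by (induction m) (auto simp: eval_Cons)

lemma spow_add: "spow z m * spow z n = spow z (m + n + 1)"
  by (induction m) (auto simp: mult.assoc)

lemma pw_add: "pw z (m + n) x = pw z m (pw z n x)"
  by (induction m) auto

lemma pw_Suc_spow: "pw z (Suc m) x = spow z m * x"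
  by (induction m) (auto simp: mult.assoc)

lemma spow_per:
  assumes per: "\<forall>z::'a::semigroup_mult. spow z (k+1) = spow z 1" and m: "m \<ge> 1"
  shows "spow (z::'a) (m + k) = spow z m"
proof (cases "m = 1")
  case True then show ?thesis using per by simp
next
  case False
  then obtain j where j: "m = j + 2" using m by (metis Suc_1 add.commute le_add_diff_inverse le_neq_implies_less less_Suc_eq_le Suc_eq_plus1 not_less_eq_eq)
  have "spow z (m + k) = spow z j * spow z (k+1)" using spow_add[of z j "k+1"] j by simp
  also have "\<dots> = spow z j * spow z 1" using per by simp
  also have "\<dots> = spow z m" using j spow_add[of z j 1] by simp
  finally show ?thesis .
qed

lemma spow_idem:
  assumes per: "\<forall>z::'a::semigroup_mult. spow z (k+1) = spow z 1" and k: "k \<ge> 2"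
  shows "spow (a::'a) (k-1) * spow a (k-1) = spow a (k-1)"
proof -
  obtain j where j: "k = j + 2" using k by (metis add.commute le_add_diff_inverse)
  have "spow a (k-1) * spow a (k-1) = spow a ((j+1)+(j+1)+1)" using j spow_add[of a "j+1" "j+1"] by simp
  also have "(j+1)+(j+1)+1 = (j+1) + k" using j by simp
  also have "spow a ((j+1) + k) = spow a (j+1)" using spow_per[OF per, of "j+1"] by simp
  finally show ?thesis using j by simp
qed

lemma pw_per:
  assumes per: "\<forall>z::'a::semigroup_mult. spow z (k+1) = spow z 1" and m: "m \<ge> 2"
  shows "pw (z::'a) (m + k) x = pw z m x"
proof -
  obtain j where j: "m = j + 2" using m by (metis add.commute le_add_diff_inverse)
  have "pw z (m + k) x = pw z j (pw z (Suc (k+1)) x)" using j pw_add[of z j "k+2" x]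
    by (simp add: algebra_simps)
  also have "pw z (Suc (k+1)) x = pw z 2 x"
  proof -
    have "pw z (Suc (k+1)) x = spow z (k+1) * x" by (rule pw_Suc_spow)
    also have "\<dots> = spow z 1 * x" using per by simp
    also have "\<dots> = pw z 2 x" using pw_Suc_spow[of z 1 x] by (simp add: numeral_2_eq_2)
    finally show ?thesis .
  qed
  also have "pw z j (pw z 2 x) = pw z m x" using j pw_add[of z j 2 x] by simp
  finally show ?thesis .
qed

lemma pw_per_mult:
  assumes per: "\<forall>z::'a::semigroup_mult. spow z (k+1) = spow z 1" and m: "m \<ge> 2"
  shows "pw (z::'a) (m + k*i) x = pw z m x"
proof (induction i)
  case 0 then show ?case by simp
next
  case (Suc i)
  have "pw z (m + k * Suc i) x = pw z ((m + k*i) + k) x" by (simp add: algebra_simps)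
  also have "\<dots> = pw z (m + k*i) x" using pw_per[OF per] m by simp
  finally show ?case using Suc by simp
qed

lemma key_alg:
  assumes per: "\<forall>z::'a::semigroup_mult. spow z (k+1) = spow z 1"
    and H: "pw (z::'a) 1 e = pw z c e" and c: "c \<ge> 2" and k1: "k \<ge> 1"
  shows "pw z 1 e = pw z (k+1) e"
proof -
  have step: "pw z (Suc m) e = pw z (m + c) e" for m
  proof -
    have "pw z (Suc m) e = pw z m (pw z 1 e)" using pw_add[of z m 1 e] by simp
    also have "\<dots> = pw z (m + c) e" using H pw_add[of z m c e] by simp
    finally show ?thesis .
  qed
  have J: "pw z 1 e = pw z (1 + j*(c-1)) e" for j
  proof (induction j)
    case 0 then show ?case by simp
  next
    case (Suc j)
    obtain d where d: "c = d + 1" using c by (metis add.commute le_add_diff_inverse le_trans one_le_numeral)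
    have eq: "1 + Suc j * (c-1) = j*(c-1) + c" using d by (simp add: algebra_simps)
    have e1: "pw z (1 + Suc j * (c-1)) e = pw z (j*(c-1) + c) e" by (simp only: eq)
    have e2: "pw z (j*(c-1) + c) e = pw z (Suc (j*(c-1))) e" by (rule step[symmetric])
    have e3: "Suc (j*(c-1)) = 1 + j*(c-1)" by simp
    show ?case using Suc.IH e1 e2 e3 by metis
  qed
  obtain d where d: "c = d + 2" using c by (metis add.commute le_add_diff_inverse)
  have "1 + k*(c-1) = (k+1) + k*d" using d by (simp add: algebra_simps)
  then have "pw z (1 + k*(c-1)) e = pw z (k+1) e" using pw_per_mult[OF per, of "k+1" z d e] k1 by simp
  then show ?thesis using J[of k] by simp
qed



fun en :: "bool list \<Rightarrow> nat" where
  "en [] = 0"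
| "en (b # bs) = (if b \<and> (bs = [] \<or> \<not> hd bs) then 1 else 0) + en bs"

lemma en_fold:
  assumes ee: "e * e = e" and ff: "f * f = (f::'a::semigroup_mult)"
  shows "e * foldr (\<lambda>b acc. (if b then f else e) * acc) bs e = pw (e*f) (en bs) e"
proof (induction bs)
  case Nil then show ?case using ee by simp
next
  case (Cons b bs)
  show ?case
  proof (cases b)
    case False
    let ?R = "foldr (\<lambda>b acc. (if b then f else e) * acc) bs e"
    have "e * (e * ?R) = (e * e) * ?R" by (simp add: mult.assoc)
    then have "e * (e * ?R) = e * ?R" using ee by simp
    then show ?thesis using Cons False by simp
  next
    case True
    show ?thesis
    proof (cases bs)
      case Nil then show ?thesis using True by (simp add: mult.assoc)
    next
      case (Cons c bs')
      show ?thesis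
      proof (cases c)
        case True
        then show ?thesis using Cons.IH \<open>b\<close> Cons ff by (simp add: mult.assoc[symmetric])
      next
        case False
        let ?R = "foldr (\<lambda>b acc. (if b then f else e) * acc) bs' e"
        have IH: "e * (e * ?R) = pw (e*f) (en bs') e" using Cons.IH Cons False by simp
        then have IH': "e * ?R = pw (e*f) (en bs') e" using ee by (simp add: mult.assoc[symmetric])
        have "e * (f * (e * ?R)) = (e*f) * (e * ?R)" by (simp add: mult.assoc)
        then show ?thesis using IH' Cons False \<open>b\<close> by simp
      qed
    qed
  qed
qed

definition sig :: "nat \<Rightarrow> nat set \<Rightarrow> nat \<Rightarrow> nat list" where
  "sig k B l = (if l \<in> B then wpow [1] k else wpow [0] k)"

lemma wpow_ne: "k \<ge> 1 \<Longrightarrow> wpow [i] k \<noteq> []"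
  by (simp add: wpow_single)

lemma sig_ne: "k \<ge> 1 \<Longrightarrow> \<forall>l. sig k B l \<noteq> []"
  by (simp add: sig_def wpow_ne)

lemma eval_sig_fold:
  assumes k: "k \<ge> 1"
  shows "eval_word \<phi> (subst_word (sig k B) u @ wpow [0] k) =
    foldr (\<lambda>b acc. (if b then eval_word \<phi> (wpow [1] k) else eval_word \<phi> (wpow [0] k)) * acc)
      (map (\<lambda>l. l \<in> B) u) (eval_word \<phi> (wpow [0] k))"
proof (induction u)
  case Nil then show ?case by simp
next
  case (Cons l u)
  have eq: "subst_word (sig k B) (l # u) @ wpow [0] k = sig k B l @ (subst_word (sig k B) u @ wpow [0] k)"
    by simp
  have "eval_word \<phi> (subst_word (sig k B) (l # u) @ wpow [0] k)
      = eval_word \<phi> (sig k B l) * eval_word \<phi> (subst_word (sig k B) u @ wpow [0] k)"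
    unfolding eq by (rule eval_append) (use sig_ne[OF k] wpow_ne[OF k] in auto)
  moreover have "eval_word \<phi> (sig k B l) = (if l \<in> B then eval_word \<phi> (wpow [1] k) else eval_word \<phi> (wpow [0] k))"
    by (simp add: sig_def)
  ultimately show ?case using Cons.IH by simp
qed

lemma eval_E: "k \<ge> 1 \<Longrightarrow> eval_word \<phi> (wpow [i] k) = spow (\<phi> i) (k-1)"
  using eval_rep[of \<phi> "k-1" i] by (simp add: wpow_single)

lemma sem_eq:
  fixes S :: "'a::semigroup_mult itself"
  assumes st: "satisfies S u v" and k: "k \<ge> 2"
    and per: "\<forall>z::'a. spow z (k+1) = spow z 1"
  shows "\<forall>\<phi>::nat\<Rightarrow>'a. pw (eval_word \<phi> (wpow [0] k) * eval_word \<phi> (wpow [1] k)) (en (map (\<lambda>l. l \<in> B) u)) (eval_word \<phi> (wpow [0] k))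
     = pw (eval_word \<phi> (wpow [0] k) * eval_word \<phi> (wpow [1] k)) (en (map (\<lambda>l. l \<in> B) v)) (eval_word \<phi> (wpow [0] k))"
proof
  fix \<phi> :: "nat \<Rightarrow> 'a"
  have k1: "k \<ge> 1" using k by simp
  let ?e = "eval_word \<phi> (wpow [0] k)" and ?f = "eval_word \<phi> (wpow [1] k)"
  have e0: "?e = spow (\<phi> 0) (k-1)" by (rule eval_E[OF k1])
  have f0: "?f = spow (\<phi> 1) (k-1)" by (rule eval_E[OF k1])
  have ee: "?e * ?e = ?e" unfolding e0 by (rule spow_idem[OF per k])
  have ff: "?f * ?f = ?f" unfolding f0 by (rule spow_idem[OF per k])
  have s2: "satisfies S (subst_word (sig k B) u) (subst_word (sig k B) v)"
    using sat_subst[OF st sig_ne[OF k1]] .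
  then have "eval_word \<phi> (subst_word (sig k B) u) = eval_word \<phi> (subst_word (sig k B) v)"
    unfolding satisfies_def by blast
  moreover have "subst_word (sig k B) u \<noteq> []" "subst_word (sig k B) v \<noteq> []"
    using s2 unfolding satisfies_def is_word_def by auto
  ultimately have "eval_word \<phi> (subst_word (sig k B) u @ wpow [0] k) = eval_word \<phi> (subst_word (sig k B) v @ wpow [0] k)"
    using wpow_ne[OF k1] by (simp add: eval_append)
  then have "?e * eval_word \<phi> (subst_word (sig k B) u @ wpow [0] k) = ?e * eval_word \<phi> (subst_word (sig k B) v @ wpow [0] k)"
    by simp
  then show "pw (?e * ?f) (en (map (\<lambda>l. l \<in> B) u)) ?e = pw (?e * ?f) (en (map (\<lambda>l. l \<in> B) v)) ?e"
    unfolding eval_sig_fold[OF k1] en_fold[OF ee ff] .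
qed

lemma wpow_Suc: "wpow w (Suc m) = w @ wpow w m" by (simp add: wpow_def)
lemma wpow_0: "wpow w 0 = []" by (simp add: wpow_def)

lemma wpow_shift: "x @ wpow (y @ x) m = wpow (x @ y) m @ x"
  by (induction m) (auto simp: wpow_Suc wpow_0)

lemma eval_wpow_pw: "w \<noteq> [] \<Longrightarrow> x \<noteq> [] \<Longrightarrow> eval_word \<phi> (wpow w m @ x) = pw (eval_word \<phi> w) m (eval_word \<phi> x)"
  by (induction m) (auto simp: wpow_Suc wpow_0 eval_append)

lemma key:
  fixes S :: "'a::semigroup_mult itself"
  assumes k: "k \<ge> 2" and per: "\<forall>z::'a. spow z (k+1) = spow z 1"
    and ii: "\<not> satisfies S (wpow [0] k @ wpow [1] k @ wpow [0] k)
                           (wpow [0] k @ wpow (wpow [1] k @ wpow [0] k) (k + 1))"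
    and H: "\<forall>\<phi>::nat\<Rightarrow>'a. pw (eval_word \<phi> (wpow [0] k) * eval_word \<phi> (wpow [1] k)) c1 (eval_word \<phi> (wpow [0] k))
     = pw (eval_word \<phi> (wpow [0] k) * eval_word \<phi> (wpow [1] k)) c2 (eval_word \<phi> (wpow [0] k))"
    and c12: "c1 \<noteq> c2" "min c1 c2 \<le> 1"
  shows False
proof -
  have k1: "k \<ge> 1" using k by simp
  define E where "E = (\<lambda>\<phi>::nat\<Rightarrow>'a. eval_word \<phi> (wpow [0] k))"
  define F where "F = (\<lambda>\<phi>::nat\<Rightarrow>'a. eval_word \<phi> (wpow [1] k))"
  have H': "\<forall>\<phi>. pw (E \<phi> * F \<phi>) c1 (E \<phi>) = pw (E \<phi> * F \<phi>) c2 (E \<phi>)" using H by (simp add: E_def F_def)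
  have "\<exists>c\<ge>2. \<forall>\<phi>. pw (E \<phi> * F \<phi>) 1 (E \<phi>) = pw (E \<phi> * F \<phi>) c (E \<phi>)"
  proof (cases "c1 = 0 \<or> c2 = 0")
    case True
    then obtain d where d: "d \<ge> 1" "\<forall>\<phi>. pw (E \<phi> * F \<phi>) 0 (E \<phi>) = pw (E \<phi> * F \<phi>) d (E \<phi>)"
    proof (cases "c1 = 0")
      case True
      then show ?thesis using that[of c2] H' c12 by auto
    next
      case False
      then have "c2 = 0" using \<open>c1 = 0 \<or> c2 = 0\<close> by simp
      then show ?thesis using that[of c1] H' c12 False by auto
    qed
    have "\<forall>\<phi>. pw (E \<phi> * F \<phi>) 1 (E \<phi>) = pw (E \<phi> * F \<phi>) (Suc d) (E \<phi>)"
      using d(2) by (metis One_nat_def pw.simps(2))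
    then show ?thesis using d(1) by (intro exI[of _ "Suc d"]) auto
  next
    case False
    then have "(c1 = 1 \<and> c2 \<ge> 2) \<or> (c2 = 1 \<and> c1 \<ge> 2)" using c12 by auto
    then show ?thesis using H' by (metis)
  qed
  then obtain c where c: "c \<ge> 2" "\<forall>\<phi>. pw (E \<phi> * F \<phi>) 1 (E \<phi>) = pw (E \<phi> * F \<phi>) c (E \<phi>)" by blast
  have K: "\<forall>\<phi>. pw (E \<phi> * F \<phi>) 1 (E \<phi>) = pw (E \<phi> * F \<phi>) (k+1) (E \<phi>)"
    using key_alg[OF per _ c(1) k1] c(2) by blast
  have "satisfies S (wpow [0] k @ wpow [1] k @ wpow [0] k)
                           (wpow [0] k @ wpow (wpow [1] k @ wpow [0] k) (k + 1))"
    unfolding satisfies_def is_word_def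
  proof (intro conjI allI)
    fix \<phi> :: "nat \<Rightarrow> 'a"
    have "eval_word \<phi> (wpow [0] k @ wpow [1] k @ wpow [0] k) = pw (E \<phi> * F \<phi>) 1 (E \<phi>)"
      using wpow_ne[OF k1] by (simp add: eval_append E_def F_def mult.assoc)
    moreover have "eval_word \<phi> (wpow [0] k @ wpow (wpow [1] k @ wpow [0] k) (k + 1)) = pw (E \<phi> * F \<phi>) (k+1) (E \<phi>)"
    proof -
      have "eval_word \<phi> (wpow (wpow [0] k @ wpow [1] k) (k + 1) @ wpow [0] k)
         = pw (eval_word \<phi> (wpow [0] k @ wpow [1] k)) (k+1) (eval_word \<phi> (wpow [0] k))"
        by (rule eval_wpow_pw) (use wpow_ne[OF k1] in auto)
      then show ?thesis unfolding wpow_shift using wpow_ne[OF k1] by (simp add: eval_append E_def F_def)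
    qed
    ultimately show "eval_word \<phi> (wpow [0] k @ wpow [1] k @ wpow [0] k) = eval_word \<phi> (wpow [0] k @ wpow (wpow [1] k @ wpow [0] k) (k + 1))"
      using K by simp
  qed (use wpow_ne[OF k1] in auto)
  then show False using ii by simp
qed



lemma en_falses: "\<forall>x\<in>set xs. \<not> x \<Longrightarrow> en (xs @ ys) = en ys"
  by (induction xs) auto

lemma en_allF: "\<forall>x\<in>set xs. \<not> x \<Longrightarrow> en xs = 0"
  using en_falses[of xs "[]"] by simp

lemma en0: "en (map P V) = 0 \<Longrightarrow> \<forall>x\<in>set V. \<not> P x"
proof (induction V)
  case Nil then show ?case by simp
next
  case (Cons x V)
  then have IH: "\<forall>x\<in>set V. \<not> P x" by (auto split: if_splits)
  show ?case
  proof (cases "P x")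
    case True
    then have "V \<noteq> [] \<and> P (hd V)" using Cons.prems by (cases V) (auto split: if_splits)
    then show ?thesis using IH by (metis hd_in_set)
  qed (use IH in auto)
qed

lemma en_trues: "xs \<noteq> [] \<Longrightarrow> \<forall>x\<in>set xs. x \<Longrightarrow> \<forall>y\<in>set ys. \<not> y \<Longrightarrow> en (xs @ ys) = 1"
proof (induction xs)
  case Nil then show ?case by simp
next
  case (Cons x xs)
  show ?case
  proof (cases "xs = []")
    case True
    then show ?thesis using Cons.prems en_allF[of ys] by (cases ys) auto
  next
    case False
    then show ?thesis using Cons by (cases xs) auto
  qed
qed

definition BLK :: "nat set \<Rightarrow> nat list \<Rightarrow> bool" where
  "BLK B V \<longleftrightarrow> (\<exists>p q r. V = p @ q @ r \<and> q \<noteq> [] \<and> (\<forall>x\<in>set p. x \<notin> B) \<and>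
      (\<forall>x\<in>set q. x \<in> B) \<and> (\<forall>x\<in>set r. x \<notin> B))"

lemma en_BLK: "BLK B V \<Longrightarrow> en (map (\<lambda>l. l \<in> B) V) = 1"
  unfolding BLK_def
proof (elim exE conjE)
  fix p q r assume h: "V = p @ q @ r" "q \<noteq> []" "\<forall>x\<in>set p. x \<notin> B" "\<forall>x\<in>set q. x \<in> B" "\<forall>x\<in>set r. x \<notin> B"
  have "en (map (\<lambda>l. l \<in> B) V) = en (map (\<lambda>l. l \<in> B) q @ map (\<lambda>l. l \<in> B) r)"
    using h by (simp add: en_falses)
  also have "\<dots> = 1" using h by (intro en_trues) auto
  finally show ?thesis .
qed

lemma decomp: "en (map P V) \<le> 1 \<Longrightarrow> \<exists>p q r. V = p @ q @ r \<and> (\<forall>x\<in>set p. \<not> P x) \<and>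
      (\<forall>x\<in>set q. P x) \<and> (\<forall>x\<in>set r. \<not> P x)"
proof (induction V)
  case Nil then show ?case by auto
next
  case (Cons x V)
  show ?case
  proof (cases "P x")
    case False
    then have "en (map P V) \<le> 1" using Cons.prems by simp
    then obtain p q r where "V = p @ q @ r" "\<forall>x\<in>set p. \<not> P x" "\<forall>x\<in>set q. P x" "\<forall>x\<in>set r. \<not> P x"
      using Cons.IH by blast
    then show ?thesis using False by (intro exI[of _ "x # p"] exI[of _ q] exI[of _ r]) auto
  next
    case True
    show ?thesis
    proof (cases "V = [] \<or> \<not> P (hd V)")
      case True2: True
      then have "en (map P V) = 0" using Cons.prems True by (cases V) auto
      then have "\<forall>x\<in>set V. \<not> P x" by (rule en0)
      then show ?thesis using True by (intro exI[of _ "[]"] exI[of _ "[x]"] exI[of _ V]) auto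
    next
      case False
      then have "en (map P V) \<le> 1" using Cons.prems True by (cases V) auto
      then obtain p q r where h: "V = p @ q @ r" "\<forall>x\<in>set p. \<not> P x" "\<forall>x\<in>set q. P x" "\<forall>x\<in>set r. \<not> P x"
        using Cons.IH by blast
      have "p = []"
      proof (rule ccontr)
        assume "p \<noteq> []"
        then have "hd V = hd p" using h by simp
        then show False using h(2) False \<open>p \<noteq> []\<close> by (metis hd_in_set)
      qed
      then show ?thesis using h True by (intro exI[of _ "[]"] exI[of _ "x # q"] exI[of _ r]) auto
    qed
  qed
qed

lemma BLK_of_en: "en (map (\<lambda>l. l \<in> B) V) = 1 \<Longrightarrow> BLK B V"
proof -
  assume h1: "en (map (\<lambda>l. l \<in> B) V) = 1"
  then obtain p q r where h: "V = p @ q @ r" "\<forall>x\<in>set p. x \<notin> B" "\<forall>x\<in>set q. x \<in> B" "\<forall>x\<in>set r. x \<notin> B"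
    using decomp[of "\<lambda>l. l \<in> B" V] by auto
  have "q \<noteq> []"
  proof
    assume "q = []"
    then have "\<forall>x\<in>set V. x \<notin> B" using h by auto
    then have "en (map (\<lambda>l. l \<in> B) V) = 0" by (intro en_allF) auto
    then show False using h1 by simp
  qed
  then show ?thesis unfolding BLK_def using h by blast
qed

abbreviation IIL :: "nat \<Rightarrow> nat list" where "IIL k \<equiv> wpow [0] k @ wpow [1] k @ wpow [0] k"
abbreviation IIR :: "nat \<Rightarrow> nat list" where "IIR k \<equiv> wpow [0] k @ wpow (wpow [1] k @ wpow [0] k) (k + 1)"

lemma BLK_pres:
  fixes S :: "'a::semigroup_mult itself"
  assumes st: "satisfies S u v" and k: "k \<ge> 2" and per: "\<forall>z::'a. spow z (k+1) = spow z 1"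
    and ii: "\<not> satisfies S (IIL k) (IIR k)" and b: "BLK B u"
  shows "BLK B v"
proof (rule BLK_of_en, rule ccontr)
  assume ne: "en (map (\<lambda>l. l \<in> B) v) \<noteq> 1"
  have e1: "en (map (\<lambda>l. l \<in> B) u) = 1" using en_BLK[OF b] .
  show False
    by (rule key[OF k per ii sem_eq[OF st k per, of B]]) (use ne e1 in auto)
qed

lemma content:
  fixes S :: "'a::semigroup_mult itself"
  assumes st: "satisfies S s t" and k: "k \<ge> 2" and per: "\<forall>z::'a. spow z (k+1) = spow z 1"
    and ii: "\<not> satisfies S (IIL k) (IIR k)" and z: "z \<in> set s"
  shows "z \<in> set t"
proof (rule ccontr)
  assume nz: "z \<notin> set t"
  have e1: "en (map (\<lambda>l. l \<in> {z}) t) = 0" using nz by (intro en_allF) auto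
  have e2: "en (map (\<lambda>l. l \<in> {z}) s) \<noteq> 0" using en0[of "\<lambda>l. l \<in> {z}" s] z by auto
  show False
    by (rule key[OF k per ii sem_eq[OF st k per, of "{z}"]]) (use e1 e2 in auto)
qed

definition fac :: "nat \<Rightarrow> nat \<Rightarrow> nat list \<Rightarrow> bool" where
  "fac x y V \<longleftrightarrow> (\<exists>u v. V = u @ [x, y] @ v)"

lemma entry_pos:
  assumes V: "p @ q @ r = u @ [a, b] @ v" and q: "q \<noteq> []"
    and p: "\<forall>x\<in>set p. x \<notin> B" and qq: "\<forall>x\<in>set q. x \<in> B" and r: "\<forall>x\<in>set r. x \<notin> B"
    and a: "a \<notin> B" and b: "b \<in> B"
  shows "u @ [a] = p"
proof -
  let ?V = "p @ q @ r"
  have la: "?V ! length u = a" using V by (simp add: nth_append)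
  have lb: "?V ! Suc (length u) = b" using V by (simp add: nth_append)
  have len: "Suc (length u) < length ?V" using V by simp
  show ?thesis
  proof (cases "length u < length p")
    case True
    have "Suc (length u) = length p"
    proof (rule ccontr)
      assume "Suc (length u) \<noteq> length p"
      then have "Suc (length u) < length p" using True by simp
      then have "?V ! Suc (length u) = p ! Suc (length u)" by (simp add: nth_append)
      then have "b \<in> set p" using lb \<open>Suc (length u) < length p\<close> by (metis nth_mem)
      then show False using p b by auto
    qed
    then show ?thesis using V by (metis append_Cons append_Nil append_assoc append_eq_append_conv length_append_singleton)
  next
    case False
    show ?thesis
    proof (cases "length u < length p + length q")
      case True
      have i: "length u - length p < length q" using True False by simp
      then have "?V ! length u = q ! (length u - length p)" using False by (simp add: nth_append)
      then have "a \<in> set q" using la i by (metis nth_mem)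
      then show ?thesis using qq a by auto
    next
      case False2: False
      have ge: "Suc (length u) \<ge> length p + length q" using False2 by simp
      have eqn: "Suc (length u) = length (p @ q) + (Suc (length u) - length p - length q)" using ge by simp
      have "((p @ q) @ r) ! (length (p @ q) + (Suc (length u) - length p - length q)) = r ! (Suc (length u) - length p - length q)"
        by (rule nth_append_length_plus)
      then have "?V ! Suc (length u) = r ! (Suc (length u) - length p - length q)" by (metis append.assoc eqn)
      moreover have "Suc (length u) - length p - length q < length r" using len False2 by simp
      ultimately have "b \<in> set r" using lb by (metis nth_mem)
      then show ?thesis using r b by auto
    qed
  qed
qed

lemma BLK_entry:
  assumes "BLK B V" "V = u1 @ [a1, b1] @ v1" "V = u2 @ [a2, b2] @ v2"
    "a1 \<notin> B" "b1 \<in> B" "a2 \<notin> B" "b2 \<in> B"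
  shows "a1 = a2"
proof -
  obtain p q r where h: "V = p @ q @ r" "q \<noteq> []" "\<forall>x\<in>set p. x \<notin> B" "\<forall>x\<in>set q. x \<in> B" "\<forall>x\<in>set r. x \<notin> B"
    using assms(1) unfolding BLK_def by blast
  have "u1 @ [a1] = p" using entry_pos[of p q r u1 a1 b1 v1 B] h assms by simp
  moreover have "u2 @ [a2] = p" using entry_pos[of p q r u2 a2 b2 v2 B] h assms by simp
  ultimately show ?thesis by (metis last_snoc)
qed

lemma BLK_rev: "BLK B V \<Longrightarrow> BLK B (rev V)"
  unfolding BLK_def
  by (elim exE conjE, rule_tac x="rev r" in exI, rule_tac x="rev q" in exI, rule_tac x="rev p" in exI) auto

lemma BLK_exit:
  assumes "BLK B V" "V = u1 @ [a1, b1] @ v1" "V = u2 @ [a2, b2] @ v2"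
    "a1 \<in> B" "b1 \<notin> B" "a2 \<in> B" "b2 \<notin> B"
  shows "b1 = b2"
proof -
  have "rev V = rev v1 @ [b1, a1] @ rev u1" by (simp add: assms(2))
  moreover have "rev V = rev v2 @ [b2, a2] @ rev u2" by (simp add: assms(3))
  ultimately show ?thesis using BLK_entry[OF BLK_rev[OF assms(1)]] assms by blast
qed

lemma adjacent_pair: "x \<in> set q \<Longrightarrow> y \<in> set q \<Longrightarrow> x \<noteq> y \<Longrightarrow> \<exists>u c d v. q = u @ [c, d] @ v \<and> c \<noteq> d"
proof (induction q)
  case Nil then show ?case by simp
next
  case (Cons c q)
  show ?case
  proof (cases q)
    case Nil then show ?thesis using Cons.prems by simp
  next
    case (Cons d q')
    show ?thesis
    proof (cases "c = d")
      case False then show ?thesis using Cons by (intro exI[of _ "[]"]) auto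
    next
      case True
      then have "x \<in> set q" "y \<in> set q" using Cons.prems Cons by auto
      then obtain u c' d' v where "q = u @ [c', d'] @ v" "c' \<noteq> d'" using Cons.IH Cons.prems by blast
      then show ?thesis by (intro exI[of _ "c # u"]) auto
    qed
  qed
qed

lemma BLK_present: "BLK {j} V \<Longrightarrow> j \<in> set V"
  unfolding BLK_def by (auto, metis hd_in_set insertCI singletonD)

lemma BLK_F2:
  assumes "BLK {j, Suc j} V" "j \<in> set V" "Suc j \<in> set V"
  shows "fac j (Suc j) V \<or> fac (Suc j) j V"
proof -
  obtain p q r where h: "V = p @ q @ r" "q \<noteq> []" "\<forall>x\<in>set p. x \<notin> {j, Suc j}"
      "\<forall>x\<in>set q. x \<in> {j, Suc j}" "\<forall>x\<in>set r. x \<notin> {j, Suc j}"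
    using assms(1) unfolding BLK_def by blast
  have "j \<in> set q" "Suc j \<in> set q" using h assms(2,3) by auto
  then obtain u c d v where q: "q = u @ [c, d] @ v" "c \<noteq> d" using adjacent_pair[of j q "Suc j"] by auto
  have cd: "c \<in> {j, Suc j}" "d \<in> {j, Suc j}" using h(4) q by auto
  have V': "V = (p @ u) @ [c, d] @ (v @ r)" using h q by simp
  from cd q(2) have "(c = j \<and> d = Suc j) \<or> (c = Suc j \<and> d = j)" by auto
  then show ?thesis unfolding fac_def using V' by blast
qed



lemma propagate:
  assumes b1: "\<forall>j. 1 \<le> j \<and> j \<le> n \<longrightarrow> BLK {j} V"
    and b2: "\<forall>j. 1 \<le> j \<and> j < n \<longrightarrow> BLK {j, Suc j} V"
    and m0: "1 \<le> m0" "m0 < n" "fac m0 (Suc m0) V"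
  shows "\<forall>m. 1 \<le> m \<and> m < n \<longrightarrow> fac m (Suc m) V"
proof -
  have up: "m0 + d < n \<Longrightarrow> fac (m0+d) (Suc (m0+d)) V" for d
  proof (induction d)
    case 0 then show ?case using m0 by simp
  next
    case (Suc d)
    define m where "m = m0 + d"
    have IH: "fac m (Suc m) V" using Suc m_def by simp
    have jn: "Suc m < n" using Suc.prems m_def by simp
    have bl1: "BLK {Suc m} V" using b1 jn by auto
    have bl2: "BLK {Suc (Suc m)} V" using b1 jn by auto
    have bl3: "BLK {Suc m, Suc (Suc m)} V" using b2 jn by auto
    have "fac (Suc m) (Suc (Suc m)) V \<or> fac (Suc (Suc m)) (Suc m) V"
      by (rule BLK_F2[OF bl3 BLK_present[OF bl1] BLK_present[OF bl2]])
    moreover have "\<not> fac (Suc (Suc m)) (Suc m) V"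
    proof
      assume "fac (Suc (Suc m)) (Suc m) V"
      then obtain u2 v2 where 2: "V = u2 @ [Suc (Suc m), Suc m] @ v2" unfolding fac_def by blast
      obtain u1 v1 where 1: "V = u1 @ [m, Suc m] @ v1" using IH unfolding fac_def by blast
      have "m = Suc (Suc m)" using BLK_entry[OF _ 1 2, of "{Suc m}"] b1 jn by auto
      then show False by simp
    qed
    ultimately show ?case using m_def by simp
  qed
  have down: "d < m0 \<Longrightarrow> fac (m0 - d) (Suc (m0 - d)) V" for d
  proof (induction d)
    case 0 then show ?case using m0 by simp
  next
    case (Suc d)
    define m where "m = m0 - d"
    have IH: "fac m (Suc m) V" using Suc m_def by simp
    have m2: "m \<ge> 2" "m < n" using Suc.prems m_def m0 by auto
    have e: "m0 - Suc d = m - 1" "Suc (m0 - Suc d) = m" using m_def Suc.prems by auto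
    have "1 \<le> m - 1 \<and> m - 1 \<le> n" using m2 by linarith
    then have bl1: "BLK {m - 1} V" using b1 by blast
    have bl2: "BLK {Suc (m - 1)} V" using b1 m2 by auto
    have "1 \<le> m - 1 \<and> m - 1 < n" using m2 by linarith
    then have bl3: "BLK {m - 1, Suc (m - 1)} V" using b2 by blast
    have "fac (m - 1) (Suc (m - 1)) V \<or> fac (Suc (m - 1)) (m - 1) V"
      by (rule BLK_F2[OF bl3 BLK_present[OF bl1] BLK_present[OF bl2]])
    moreover have "\<not> fac m (m - 1) V"
    proof
      assume "fac m (m - 1) V"
      then obtain u2 v2 where 2: "V = u2 @ [m, m - 1] @ v2" unfolding fac_def by blast
      obtain u1 v1 where 1: "V = u1 @ [m, Suc m] @ v1" using IH unfolding fac_def by blast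
      have "Suc m = m - 1" using BLK_exit[OF _ 1 2, of "{m}"] b1 m2 by auto
      then show False by simp
    qed
    ultimately show ?case using e m2 by (simp add: Suc_diff_1)
  qed
  show ?thesis
  proof (intro allI impI)
    fix m assume m: "1 \<le> m \<and> m < n"
    show "fac m (Suc m) V"
    proof (cases "m \<ge> m0")
      case True then show ?thesis using up[of "m - m0"] m by simp
    next
      case False then show ?thesis using down[of "m0 - m"] m by simp
    qed
  qed
qed

lemma fac_Cons: "fac x y w \<Longrightarrow> fac x y (c # w)"
  unfolding fac_def by (metis append_Cons)

lemma fac_append_cases: "fac x y (u @ w) \<Longrightarrow> fac x y u \<or> fac x y w \<or> x = last u"
proof (induction u)
  case Nil then show ?case by simp
next
  case (Cons c u)
  then obtain s1 s2 where h: "c # (u @ w) = s1 @ [x, y] @ s2" unfolding fac_def by auto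
  show ?case
  proof (cases s1)
    case Nil
    then have cx: "c = x" and uw: "u @ w = y # s2" using h by auto
    show ?thesis
    proof (cases u)
      case Nil then show ?thesis using cx by simp
    next
      case (Cons d u')
      then have "d = y" using uw by simp
      then show ?thesis using cx Cons unfolding fac_def by (metis append_Cons append_Nil)
    qed
  next
    case (Cons c' s1')
    then have "u @ w = s1' @ [x, y] @ s2" using h by simp
    then have "fac x y u \<or> fac x y w \<or> x = last u" using Cons.IH unfolding fac_def by blast
    moreover have "fac x y u \<Longrightarrow> fac x y (c # u)" by (rule fac_Cons)
    moreover have "u = [] \<Longrightarrow> fac x y w" using \<open>u @ w = s1' @ [x, y] @ s2\<close> unfolding fac_def by auto
    ultimately show ?thesis by (cases "u = []") auto
  qed
qed

lemma fac_concat: "fac x y (concat ps) \<Longrightarrow> (\<exists>p\<in>set ps. fac x y p) \<or> x \<in> last ` set ps"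
proof (induction ps)
  case Nil then show ?case unfolding fac_def by simp
next
  case (Cons p ps)
  then have "fac x y p \<or> fac x y (concat ps) \<or> x = last p" using fac_append_cases by simp
  then show ?case using Cons.IH by auto
qed

lemma fac_mono: "fac x y w \<Longrightarrow> fac x y (u @ w @ v)"
  unfolding fac_def by (metis append.assoc)

definition wn :: "nat \<Rightarrow> nat \<Rightarrow> nat list" where
  "wn k n = [0] @ concat (map (\<lambda>i. wpow [i] k) [1..<n+1]) @ [0]"

definition wn' :: "nat \<Rightarrow> nat \<Rightarrow> nat list" where
  "wn' k n = [0] @ concat (map (\<lambda>i. wpow [i] k) (rev [1..<n+1])) @ [0]"

lemma split_upt: "1 \<le> j \<Longrightarrow> j \<le> n \<Longrightarrow> [1..<n+1] = [1..<j] @ j # [Suc j..<n+1]"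
proof -
  assume a: "1 \<le> j" "j \<le> n"
  obtain d where d: "n + 1 = j + d" using a by (metis le_add_diff_inverse le_SucI Suc_eq_plus1)
  have "[1..<j + d] = [1..<j] @ [j..<j + d]" by (rule upt_add_eq_append) (use a in simp)
  then have "[1..<n+1] = [1..<j] @ [j..<n+1]" by (simp only: d)
  also have "[j..<n+1] = j # [Suc j..<n+1]" using \<open>j \<le> n\<close> by (simp add: upt_conv_Cons)
  finally show ?thesis .
qed

lemma wn_blk1:
  assumes k: "k \<ge> 1" and j: "1 \<le> j" "j \<le> n"
  shows "BLK {j} (wn k n)"
proof -
  have "wn k n = (0 # concat (map (\<lambda>i. replicate k i) [1..<j])) @ replicate k j @
           (concat (map (\<lambda>i. replicate k i) [Suc j..<n+1]) @ [0])"
    unfolding wn_def wpow_single split_upt[OF j] by simp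
  then show ?thesis unfolding BLK_def using k j
    by (intro exI[of _ "0 # concat (map (\<lambda>i. replicate k i) [1..<j])"] exI[of _ "replicate k j"]
        exI[of _ "concat (map (\<lambda>i. replicate k i) [Suc j..<n+1]) @ [0]"]) auto
qed

lemma wn_blk2:
  assumes k: "k \<ge> 1" and j: "1 \<le> j" "j < n"
  shows "BLK {j, Suc j} (wn k n)"
proof -
  have s: "[Suc j..<n+1] = Suc j # [Suc (Suc j)..<n+1]" using j by (simp add: upt_conv_Cons)
  have "wn k n = (0 # concat (map (\<lambda>i. replicate k i) [1..<j])) @ (replicate k j @ replicate k (Suc j)) @
           (concat (map (\<lambda>i. replicate k i) [Suc (Suc j)..<n+1]) @ [0])"
    unfolding wn_def wpow_single split_upt[of j n, OF j(1) less_imp_le[OF j(2)]] s by simp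
  then show ?thesis unfolding BLK_def using k j
    by (intro exI[of _ "0 # concat (map (\<lambda>i. replicate k i) [1..<j])"] exI[of _ "replicate k j @ replicate k (Suc j)"]
        exI[of _ "concat (map (\<lambda>i. replicate k i) [Suc (Suc j)..<n+1]) @ [0]"]) auto
qed

lemma wn_fac:
  assumes k: "k \<ge> 1" and j: "1 \<le> j" "j < n"
  shows "fac j (Suc j) (wn k n)"
proof -
  have s: "[Suc j..<n+1] = Suc j # [Suc (Suc j)..<n+1]" using j by (simp add: upt_conv_Cons)
  obtain k' where k': "k = Suc k'" using k by (cases k) auto
  have r1: "replicate k j = replicate (k-1) j @ [j]" using k' by (simp add: replicate_append_same)
  have r2: "replicate k (Suc j) = Suc j # replicate (k-1) (Suc j)" using k' by simp
  have "wn k n = (0 # concat (map (\<lambda>i. replicate k i) [1..<j]) @ replicate (k-1) j) @ [j, Suc j] @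
           (replicate (k-1) (Suc j) @ concat (map (\<lambda>i. replicate k i) [Suc (Suc j)..<n+1]) @ [0])"
    unfolding wn_def wpow_single split_upt[of j n, OF j(1) less_imp_le[OF j(2)]] s
    by (simp add: r1 r2)
  then show ?thesis unfolding fac_def by blast
qed

lemma sorted_concat_rep: "sorted_wrt (\<ge>) xs \<Longrightarrow> sorted_wrt (\<ge>) (concat (map (\<lambda>i. replicate k (i::nat)) xs))"
proof (induction xs)
  case Nil then show ?case by simp
next
  case (Cons x xs)
  have "sorted_wrt (\<ge>) (replicate k x)" by (induction k) auto
  then show ?case using Cons by (auto simp: sorted_wrt_append)
qed

lemma wn'_nofac:
  assumes n: "n \<ge> 2"
  shows "\<not> fac 1 2 (wn' k n)"
proof
  assume "fac 1 2 (wn' k n)"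
  then obtain u v where h: "wn' k n = u @ [1, 2] @ v" unfolding fac_def by blast
  let ?M = "concat (map (\<lambda>i. replicate k i) (rev [1..<n+1]))"
  have srt: "sorted_wrt (\<ge>) (?M @ [0])"
  proof -
    have "sorted_wrt (\<ge>) (rev [1..<n+1])" using sorted_upt[of 1 "n+1"] by (simp only: sorted_wrt_rev)
    then have "sorted_wrt (\<ge>) ?M" by (rule sorted_concat_rep)
    then show ?thesis by (simp add: sorted_wrt_append)
  qed
  have w: "wn' k n = 0 # (?M @ [0])" unfolding wn'_def wpow_single by simp
  show False
  proof (cases u)
    case Nil then show False using h w by simp
  next
    case (Cons c u')
    then have "?M @ [0] = u' @ [1, 2] @ v" using h w by simp
    then show False using srt by (simp add: sorted_wrt_append)
  qed
qed



lemma core: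
  fixes S :: "'a::semigroup_mult itself"
  assumes k: "k \<ge> 2" and per: "\<forall>z::'a. spow z (k+1) = spow z 1"
    and ii: "\<not> satisfies S (IIL k) (IIR k)"
    and st: "satisfies S s t" and len: "length s + 4 \<le> n" and th: "\<forall>x. \<theta> x \<noteq> []"
    and P1: "satisfies S (wn k n) (a @ subst_word \<theta> s @ b)"
    and P2: "\<forall>m. 1 \<le> m \<and> m < n \<longrightarrow> fac m (Suc m) (a @ subst_word \<theta> s @ b)"
  shows "satisfies S (wn k n) (a @ subst_word \<theta> t @ b) \<and>
    (\<forall>m. 1 \<le> m \<and> m < n \<longrightarrow> fac m (Suc m) (a @ subst_word \<theta> t @ b))"
proof -
  have k1: "k \<ge> 1" using k by simp
  let ?V = "a @ subst_word \<theta> t @ b"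
  have st2: "satisfies S (subst_word \<theta> s) (subst_word \<theta> t)" by (rule sat_subst[OF st th])
  have sat1: "satisfies S (wn k n) ?V"
    using P1 st2 unfolding satisfies_def is_word_def
    by (auto intro: eval_ctx[symmetric] simp del: append_assoc)
  have blk1: "\<forall>j. 1 \<le> j \<and> j \<le> n \<longrightarrow> BLK {j} ?V"
    using BLK_pres[OF sat1 k per ii] wn_blk1[OF k1] by blast
  have blk2: "\<forall>j. 1 \<le> j \<and> j < n \<longrightarrow> BLK {j, Suc j} ?V"
    using BLK_pres[OF sat1 k per ii] wn_blk2[OF k1] by blast
  define ps where "ps = a # map \<theta> s @ [b]"
  have cps: "concat ps = a @ subst_word \<theta> s @ b" unfolding ps_def subst_word_def by simp
  have cardL: "card (last ` set ps) \<le> length s + 2"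
  proof -
    have "card (last ` set ps) \<le> card (set ps)" by (rule card_image_le) simp
    also have "\<dots> \<le> length ps" by (rule card_length)
    finally show ?thesis unfolding ps_def by simp
  qed
  obtain m where m: "1 \<le> m" "m < n" "m \<notin> last ` set ps"
  proof -
    have "\<not> {1..<n} \<subseteq> last ` set ps"
    proof
      assume "{1..<n} \<subseteq> last ` set ps"
      then have "card {1..<n} \<le> card (last ` set ps)" by (intro card_mono) auto
      then show False using cardL len by simp
    qed
    then obtain m where "m \<in> {1..<n}" "m \<notin> last ` set ps" by blast
    then show ?thesis using that by auto
  qed
  have "fac m (Suc m) (concat ps)" using P2 m cps by simp
  then obtain p where p: "p \<in> set ps" "fac m (Suc m) p" using fac_concat m(3) by blast
  have facV: "fac m (Suc m) ?V"
  proof -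
    have "p = a \<or> p = b \<or> (\<exists>z\<in>set s. p = \<theta> z)" using p(1) unfolding ps_def by auto
    then consider "p = a" | "p = b" | z where "z \<in> set s" "p = \<theta> z" by blast
    then show ?thesis
    proof cases
      case 1 then show ?thesis using fac_mono[OF p(2), of "[]" "subst_word \<theta> t @ b"] by simp
    next
      case 2 then show ?thesis using fac_mono[OF p(2), of "a @ subst_word \<theta> t" "[]"] by simp
    next
      case 3
      then have "z \<in> set t" using content[OF st k per ii] by blast
      then obtain t1 t2 where "t = t1 @ z # t2" by (meson split_list)
      then have "?V = (a @ subst_word \<theta> t1) @ p @ (subst_word \<theta> t2 @ b)" using 3 by simp
      then show ?thesis using fac_mono[OF p(2)] by metis
    qed
  qed
  have "\<forall>m. 1 \<le> m \<and> m < n \<longrightarrow> fac m (Suc m) ?V"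
    by (rule propagate[OF blk1 blk2 m(1,2) facV])
  then show ?thesis using sat1 by blast
qed

lemma deriv_inv:
  assumes "derivable \<Sigma> u v"
    and ax: "\<forall>(s,t)\<in>\<Sigma>. \<forall>\<theta> a b. (\<forall>x. \<theta> x \<noteq> []) \<longrightarrow> (Q (a @ subst_word \<theta> s @ b) \<longleftrightarrow> Q (a @ subst_word \<theta> t @ b))"
  shows "\<forall>\<theta> a b. (\<forall>x. \<theta> x \<noteq> []) \<longrightarrow> (Q (a @ subst_word \<theta> u @ b) \<longleftrightarrow> Q (a @ subst_word \<theta> v @ b))"
  using assms(1)
proof (induction rule: derivable.induct)
  case (ax u v)
  show ?case
  proof (intro allI impI)
    fix \<theta> :: "nat \<Rightarrow> nat list" and a b assume th: "\<forall>x. \<theta> x \<noteq> []"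
    have "\<forall>\<theta> a b. (\<forall>x. \<theta> x \<noteq> []) \<longrightarrow> (Q (a @ subst_word \<theta> u @ b) \<longleftrightarrow> Q (a @ subst_word \<theta> v @ b))"
      using assms(2) ax.hyps by fastforce
    then show "Q (a @ subst_word \<theta> u @ b) = Q (a @ subst_word \<theta> v @ b)" using th by blast
  qed
next
  case (refl u) then show ?case by simp
next
  case (sym u v)
  show ?case
  proof (intro allI impI)
    fix \<theta> :: "nat \<Rightarrow> nat list" and a b assume th: "\<forall>x. \<theta> x \<noteq> []"
    have "Q (a @ subst_word \<theta> u @ b) = Q (a @ subst_word \<theta> v @ b)" using sym.IH th by simp
    then show "Q (a @ subst_word \<theta> v @ b) = Q (a @ subst_word \<theta> u @ b)" by simp
  qed
next
  case (trans u v w)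
  show ?case
  proof (intro allI impI)
    fix \<theta> :: "nat \<Rightarrow> nat list" and a b assume th: "\<forall>x. \<theta> x \<noteq> []"
    have "Q (a @ subst_word \<theta> u @ b) = Q (a @ subst_word \<theta> v @ b)" using trans.IH(1) th by simp
    moreover have "Q (a @ subst_word \<theta> v @ b) = Q (a @ subst_word \<theta> w @ b)" using trans.IH(2) th by simp
    ultimately show "Q (a @ subst_word \<theta> u @ b) = Q (a @ subst_word \<theta> w @ b)" by simp
  qed
next
  case (subst u v \<sigma>)
  show ?case
  proof (intro allI impI)
    fix \<theta> :: "nat \<Rightarrow> nat list" and a b assume th: "\<forall>x. \<theta> x \<noteq> []"
    have ne: "\<forall>x. subst_word \<theta> (\<sigma> x) \<noteq> []" using subst.hyps(2) th subst_ne unfolding is_word_def by blast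
    show "Q (a @ subst_word \<theta> (subst_word \<sigma> u) @ b) = Q (a @ subst_word \<theta> (subst_word \<sigma> v) @ b)"
      unfolding subst_subst using subst.IH ne by simp
  qed
next
  case (mult_left u v w)
  show ?case
  proof (intro allI impI)
    fix \<theta> :: "nat \<Rightarrow> nat list" and a b assume th: "\<forall>x. \<theta> x \<noteq> []"
    show "Q (a @ subst_word \<theta> (w @ u) @ b) = Q (a @ subst_word \<theta> (w @ v) @ b)"
      using spec[OF spec[OF spec[OF mult_left.IH], of \<theta>], of "a @ subst_word \<theta> w" b] th by simp
  qed
next
  case (mult_right u v w)
  show ?case
  proof (intro allI impI)
    fix \<theta> :: "nat \<Rightarrow> nat list" and a b assume th: "\<forall>x. \<theta> x \<noteq> []"
    show "Q (a @ subst_word \<theta> (u @ w) @ b) = Q (a @ subst_word \<theta> (v @ w) @ b)"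
      using spec[OF spec[OF spec[OF mult_right.IH], of \<theta>], of a "subst_word \<theta> w @ b"] th by simp
  qed
qed

theorem theorem5p2:
  fixes k :: nat and S :: "'a::semigroup_mult itself"
  assumes k: "k > 1"
    and i: "\<And>n. n > 1 \<Longrightarrow> satisfies S
              ([0] @ concat (map (\<lambda>i. wpow [i] k) [1..<n+1]) @ [0])
              ([0] @ concat (map (\<lambda>i. wpow [i] k) (rev [1..<n+1])) @ [0])"
    and ii: "\<not> satisfies S (wpow [0] k @ wpow [1] k @ wpow [0] k)
                           (wpow [0] k @ wpow (wpow [1] k @ wpow [0] k) (k + 1))"
    and iii1: "satisfies S (wpow [0] (k + 2)) (wpow [0] 2)"
    and iii2: "satisfies S (wpow [0] (k + 1) @ [1, 0]) [0, 1, 0]"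
    and iii3: "satisfies S ([0, 1] @ wpow [0] (k + 1)) [0, 1, 0]"
  shows "\<not> finitely_based S"
proof
  assume "finitely_based S"
  then obtain \<Sigma> where fin: "finite \<Sigma>" and sat: "\<forall>(u, v) \<in> \<Sigma>. satisfies S u v"
    and comp: "\<forall>u v. satisfies S u v \<longrightarrow> derivable \<Sigma> u v"
    unfolding finitely_based_def by blast
  have k2: "k \<ge> 2" using k by simp
  have k1: "k \<ge> 1" using k by simp
  have per: "\<forall>z::'a. spow z (k+1) = spow z 1"
  proof
    fix z :: 'a
    have "eval_word (\<lambda>_. z) (wpow [0] (k + 2)) = eval_word (\<lambda>_. z) (wpow [0] 2)"
      using iii1 unfolding satisfies_def by blast
    then show "spow z (k+1) = spow z 1"
      unfolding wpow_single using eval_rep[of "\<lambda>_. z" "k+1" 0] eval_rep[of "\<lambda>_. z" 1 0]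
      by (simp add: numeral_2_eq_2)
  qed
  define L where "L = (\<Sum>st\<in>\<Sigma>. length (fst st) + length (snd st))"
  define n where "n = L + 4"
  have lenb: "length s + 4 \<le> n \<and> length t + 4 \<le> n" if "(s, t) \<in> \<Sigma>" for s t
  proof -
    have "length (fst (s,t)) + length (snd (s,t)) \<le> L"
      unfolding L_def by (rule member_le_sum) (use that fin in auto)
    then show ?thesis unfolding n_def by simp
  qed
  define Q where "Q = (\<lambda>V. satisfies S (wn k n) V \<and> (\<forall>m. 1 \<le> m \<and> m < n \<longrightarrow> fac m (Suc m) V))"
  have axQ': "Q (a @ subst_word \<theta> s @ b) \<longleftrightarrow> Q (a @ subst_word \<theta> t @ b)"
    if st: "(s, t) \<in> \<Sigma>" and th: "\<forall>x. \<theta> x \<noteq> []"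
    for s t :: "nat list" and \<theta> :: "nat \<Rightarrow> nat list" and a b :: "nat list"
  proof -
    have sst: "satisfies S s t" using sat st by blast
    show ?thesis
      unfolding Q_def
      using core[OF k2 per ii sst _ th, of n a b] core[OF k2 per ii sat_sym[OF sst] _ th, of n a b] lenb[OF st]
      by blast
  qed
  have axQ: "\<forall>(s,t)\<in>\<Sigma>. \<forall>\<theta> a b. (\<forall>x. \<theta> x \<noteq> []) \<longrightarrow> (Q (a @ subst_word \<theta> s @ b) \<longleftrightarrow> Q (a @ subst_word \<theta> t @ b))"
  proof (intro ballI)
    fix p assume p: "p \<in> \<Sigma>"
    obtain s t where pst: "p = (s, t)" by (cases p)
    show "case p of (s, t) \<Rightarrow> \<forall>\<theta> a b. (\<forall>x. \<theta> x \<noteq> []) \<longrightarrow> (Q (a @ subst_word \<theta> s @ b) \<longleftrightarrow> Q (a @ subst_word \<theta> t @ b))"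
      unfolding pst using axQ'[of s t] p pst by simp
  qed
  have n1: "n > 1" "n \<ge> 2" unfolding n_def by auto
  have "derivable \<Sigma> (wn k n) (wn' k n)" using comp i[OF n1(1)] unfolding wn_def wn'_def by blast
  then have h: "\<forall>\<theta> a b. (\<forall>x. \<theta> x \<noteq> []) \<longrightarrow> (Q (a @ subst_word \<theta> (wn k n) @ b) \<longleftrightarrow> Q (a @ subst_word \<theta> (wn' k n) @ b))"
    by (rule deriv_inv[OF _ axQ])
  have "Q (wn k n) \<longleftrightarrow> Q (wn' k n)"
    using h[rule_format, of "\<lambda>x. [x]" "[]" "[]"] by simp
  moreover have "Q (wn k n)"
  proof -
    have "wn k n \<noteq> []" by (simp add: wn_def)
    then have "satisfies S (wn k n) (wn k n)" unfolding satisfies_def is_word_def by simp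
    then show ?thesis unfolding Q_def using wn_fac[OF k1] by blast
  qed
  moreover have "\<not> Q (wn' k n)"
  proof
    assume "Q (wn' k n)"
    then have "fac 1 (Suc 1) (wn' k n)" unfolding Q_def using n1 by blast
    then show False using wn'_nofac[OF n1(2), of k] by (simp add: numeral_2_eq_2)
  qed
  ultimately show False by blast
qed


end
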